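(* Under the standing setup below, let $y\in\mathbb Y$ be such that $\mathbf Ax=y$ is solvable in $\operatorname{dom}(\mathcal{Q})$. Let $(\delta_n)_{n\in\mathbb N}\subseteq(0,\infty)$ with $\delta_n\to0$, and let $(y_n)_{n\in\mathbb N}\subseteq\mathbb Y$ satisfy $\|y-y_n\|\le\delta_n$. Write $\mathcal{R}_n:=\mathcal{R}_{\delta_n}$ and $\boldsymbol\Phi_n:=\boldsymbol\Phi_{\theta(\delta_n)}$, and choose $x_n\in\operatorname{argmin}\{\mathcal{R}_n(z)\mid \|\mathbf Az-y_n\|\le\delta_n\}$. Then: (i) $(x_n)_{n\in\mathbb N}$ has at least one weak accumulation point; (ii) the weak limit $x^+$ of every weakly convergent subsequence $(x_{n(k)})_{k\in\mathbb N}$ is an $\mathcal{R}$-minimizing solution of $\mathbf Ax=y$, and $\mathcal{R}_{n(k)}(x_{n(k)})\to\mathcal{R}(x^+)$ as $k\to\infty$; (iii) if the $\mathcal{R}$-minimizing solution $x^+$ of $\mathbf Ax=y$ is unique, then $x_n\rightharpoonup x^+$ weakly and $\mathcal{R}_n(x_n)\to\mathcal{R}(x^+)$ as $n\to\infty$.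
   Context: Standing setup: $\mathbb X,\mathbb Y$ are real Hilbert spaces and $\mathbf A\colon\mathbb X\to\mathbb Y$ is a bounded linear operator (possibly with non-trivial kernel). Fix $\lambda>0$. Let $\boldsymbol\Phi\colon\mathbb X\to\mathbb X$ and, for each $\delta>0$, $\boldsymbol\Phi_{\theta(\delta)}\colon\mathbb X\to\mathbb X$ be maps (neural networks), and let $\mathcal{Q}\colon\mathbb X\to[0,\infty]$. Define $\mathcal{R}_\delta(x)=\tfrac12\|\boldsymbol\Phi_{\theta(\delta)}(x)-x\|^2+\lambda\mathcal{Q}(x)$ and $\mathcal{R}(x)=\tfrac12\|\boldsymbol\Phi(x)-x\|^2+\lambda\mathcal{Q}(x)$. Standing assumptions: (A1) $\boldsymbol\Phi$ and all $\boldsymbol\Phi_{\theta(\delta)}$ are weakly (sequentially) continuous; (A2) $\boldsymbol\Phi_{\theta(\delta)}\to\boldsymbol\Phi$ weakly uniformly on bounded sets as $\delta\to0$, meaning that for every bounded $B\subseteq\mathbb X$ and every $h\in\mathbb X$, $\sup_{x\in B}|\langle\boldsymbol\Phi_{\theta(\delta)}(x)-\boldsymbol\Phi(x),h\rangle|\to0$ as $\delta\to0$; (A3) $\boldsymbol\Phi_{\theta(\delta)}(x)\to\boldsymbol\Phi(x)$ in norm as $\delta\to0$ for every $\mathcal{R}$-minimizing solution $x$ of $\mathbf Ax=y$; (A4) $\mathcal{Q}$ is proper, coercive and weakly lower semicontinuous. An $\mathcal{R}$-minimizing solution of $\mathbf Ax=y$ is any element of $\operatorname{argmin}\{\mathcal{R}(x)\mid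 \mathbf Ax=y\}$. *)

theory Defs
  imports "HOL-Analysis.Analysis"
begin

definition weak_conv :: "(nat \<Rightarrow> 'a::real_inner) \<Rightarrow> 'a \<Rightarrow> bool" where
  "weak_conv xs x \<longleftrightarrow> (\<forall>h. (\<lambda>n. inner (xs n) h) \<longlonglongrightarrow> inner x h)"

definition weakly_seq_continuous :: "('a::real_inner \<Rightarrow> 'b::real_inner) \<Rightarrow> bool" where
  "weakly_seq_continuous F \<longleftrightarrow> (\<forall>xs x. weak_conv xs x \<longrightarrow> weak_conv (\<lambda>n. F (xs n)) (F x))"

definition weakly_lsc :: "('a::real_inner \<Rightarrow> ereal) \<Rightarrow> bool" where
  "weakly_lsc Q \<longleftrightarrow> (\<forall>xs x. weak_conv xs x \<longrightarrow> Q x \<le> liminf (\<lambda>n. Q (xs n)))"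

definition coercive :: "('a::real_normed_vector \<Rightarrow> ereal) \<Rightarrow> bool" where
  "coercive Q \<longleftrightarrow> (\<forall>M::real. \<exists>r. \<forall>x. norm x \<ge> r \<longrightarrow> Q x \<ge> ereal M)"

definition proper :: "('a \<Rightarrow> ereal) \<Rightarrow> bool" where
  "proper Q \<longleftrightarrow> (\<exists>x. Q x < \<infinity>)"

definition Reg :: "('a::real_normed_vector \<Rightarrow> 'a) \<Rightarrow> real \<Rightarrow> ('a \<Rightarrow> ereal) \<Rightarrow> 'a \<Rightarrow> ereal" where
  "Reg Phi lam Q x = ereal ((1/2) * (norm (Phi x - x))\<^sup>2) + ereal lam * Q x"

definition R_min_solution :: "('a \<Rightarrow> 'b) \<Rightarrow> 'b \<Rightarrow> ('a \<Rightarrow> ereal) \<Rightarrow> 'a \<Rightarrow> bool" where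
  "R_min_solution A y R x \<longleftrightarrow> A x = y \<and> (\<forall>z. A z = y \<longrightarrow> R x \<le> R z)"

end

theory Submission
  imports Defs "HOL-Library.Diagonal_Subsequence"
begin



lemma weak_conv_unique:
  assumes "weak_conv xs a" "weak_conv xs b" shows "a = b"
proof -
  have "(\<lambda>n. inner (xs n) (a - b)) \<longlonglongrightarrow> inner a (a - b)"
       "(\<lambda>n. inner (xs n) (a - b)) \<longlonglongrightarrow> inner b (a - b)"
    using assms unfolding weak_conv_def by auto
  hence "inner a (a - b) = inner b (a - b)" using LIMSEQ_unique by blast
  hence "inner (a - b) (a - b) = 0" by (simp add: inner_diff_left)
  thus ?thesis by simp
qed

lemma weak_conv_subseq:
  assumes "weak_conv xs a" "strict_mono r" shows "weak_conv (xs \<circ> r) a"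
  unfolding weak_conv_def
proof
  fix h
  have "(\<lambda>n. inner (xs n) h) \<longlonglongrightarrow> inner a h" using assms(1) unfolding weak_conv_def by blast
  from LIMSEQ_subseq_LIMSEQ[OF this assms(2)]
  show "(\<lambda>n. inner ((xs \<circ> r) n) h) \<longlonglongrightarrow> inner a h" by (simp add: o_def)
qed

lemma norm_imp_weak_conv:
  assumes "xs \<longlonglongrightarrow> a" shows "weak_conv xs a"
  unfolding weak_conv_def using assms by (auto intro!: tendsto_intros)

lemma parallelogram:
  fixes a b :: "'a::real_inner"
  shows "(norm (a - b))\<^sup>2 + (norm (a + b))\<^sup>2 = 2 * (norm a)\<^sup>2 + 2 * (norm b)\<^sup>2"
  using dot_norm[of a b] dot_norm_neg[of a b] by argo

lemma lin1: "(p::real) + 4*x = 2*a + 2*b \<Longrightarrow> dd \<le> x \<Longrightarrow> b \<le> B \<Longrightarrow> a \<le> A \<Longrightarrow> p \<le> 2*(B - dd) + 2*(A - dd)"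
  by argo

lemma lin2: "(p::real) \<le> 2 * u1 + 2 * v1 \<Longrightarrow> u1 \<le> u2 \<Longrightarrow> v1 \<le> v2 \<Longrightarrow> u2 \<le> w \<Longrightarrow> v2 \<le> w \<Longrightarrow> w < ee/4 \<Longrightarrow> p < ee"
  by argo

lemma proj_exists:
  fixes S :: "'a::{real_inner,complete_space} set"
  assumes cl: "closed S" and cv: "convex S" and ne: "S \<noteq> {}"
  shows "\<exists>p\<in>S. \<forall>x\<in>S. norm (z - p) \<le> norm (z - x)"
proof -
  define d where "d = infdist z S"
  have d0: "d \<ge> 0" unfolding d_def by (rule infdist_nonneg)
  have dle: "d \<le> norm (z - x)" if "x \<in> S" for x
    using infdist_le[OF that, of z] by (simp add: d_def dist_norm)
  have "\<exists>x\<in>S. norm (z - x) < d + 1 / (Suc n)" for n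
  proof -
    have "infdist z S < d + 1 / Suc n" by (simp add: d_def)
    then obtain x where "x \<in> S" "dist z x < d + 1 / Suc n"
      using cInf_lessD[of "dist z ` S" "d + 1 / Suc n"] ne by (auto simp: infdist_def)
    thus ?thesis by (auto simp: dist_norm)
  qed
  then obtain s where sS: "\<And>n. s n \<in> S" and sd: "\<And>n. norm (z - s n) < d + 1 / Suc n"
    by metis
  have key: "(norm (s m - s n))\<^sup>2 \<le> 2 * ((d + 1 / Suc m)\<^sup>2 - d\<^sup>2) + 2 * ((d + 1 / Suc n)\<^sup>2 - d\<^sup>2)"
    for m n
  proof -
    have mid: "(1/2) *\<^sub>R (s m + s n) \<in> S"
      using convexD[OF cv sS[of m] sS[of n], of "1/2" "1/2"] by (simp add: scaleR_add_right)
    define X where "X = (norm (z - (1/2) *\<^sub>R (s m + s n)))\<^sup>2"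
    have "d \<le> norm (z - (1/2) *\<^sub>R (s m + s n))" using dle[OF mid] .
    hence A1: "d\<^sup>2 \<le> X" using d0 unfolding X_def by (simp add: power_mono)
    have "(z - s n) + (z - s m) = 2 *\<^sub>R (z - (1/2) *\<^sub>R (s m + s n))"
      by (simp add: algebra_simps scaleR_2)
    hence A2: "(norm ((z - s n) + (z - s m)))\<^sup>2 = 4 * X"
      unfolding X_def by (simp add: power_mult_distrib)
    have A3: "(z - s n) - (z - s m) = s m - s n" by simp
    have P: "(norm (s m - s n))\<^sup>2 + 4 * X = 2 * (norm (z - s n))\<^sup>2 + 2 * (norm (z - s m))\<^sup>2"
      using parallelogram[of "z - s n" "z - s m"] unfolding A2 A3 .
    have A4: "(norm (z - s m))\<^sup>2 \<le> (d + 1 / Suc m)\<^sup>2"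
      using sd[of m] by (intro power_mono) auto
    have A5: "(norm (z - s n))\<^sup>2 \<le> (d + 1 / Suc n)\<^sup>2"
      using sd[of n] by (intro power_mono) auto
    show ?thesis by (rule lin1[OF P A1 A4 A5])
  qed
  have bnd: "(d + 1 / Suc m)\<^sup>2 - d\<^sup>2 \<le> (2*d+1) / Suc m" for m
  proof -
    have e1: "(d + 1 / Suc m)\<^sup>2 - d\<^sup>2 = 2*d/Suc m + 1/(real (Suc m))\<^sup>2"
      by (simp add: power2_sum power_divide)
    have e2: "1/(real (Suc m))\<^sup>2 \<le> 1 / Suc m"
    proof -
      have "Suc m \<le> (Suc m)\<^sup>2" by (simp add: power2_eq_square)
      hence "real (Suc m) \<le> (real (Suc m))\<^sup>2" by (metis of_nat_le_iff of_nat_power)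
      thus ?thesis by (intro divide_left_mono) auto
    qed
    have "(d + 1 / Suc m)\<^sup>2 - d\<^sup>2 \<le> 2*d/Suc m + 1/Suc m" using e1 e2 by argo
    moreover have "2*d/Suc m + 1/Suc m = (2*d+1)/Suc m" by (simp add: add_divide_distrib)
    ultimately show ?thesis by argo
  qed
  have "Cauchy s"
  proof (rule metric_CauchyI)
    fix e :: real assume e: "e > 0"
    obtain N :: nat where N: "(2*d+1) / Suc N < e\<^sup>2 / 4"
    proof -
      obtain N :: nat where "(2*d+1) / (e\<^sup>2/4) < N" using reals_Archimedean2 by blast
      hence "(2*d+1) < N * (e\<^sup>2/4)" using e by (simp add: divide_less_eq)
      moreover have "N * (e\<^sup>2/4) \<le> Suc N * (e\<^sup>2/4)"
        by (intro mult_right_mono) auto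
      ultimately have "(2*d+1) < Suc N * (e\<^sup>2/4)" by argo
      thus ?thesis using that[of N] e by (simp add: divide_less_eq mult.commute)
    qed
    show "\<exists>M. \<forall>m\<ge>M. \<forall>n\<ge>M. dist (s m) (s n) < e"
    proof (intro exI allI impI)
      fix m n assume mn: "m \<ge> N" "n \<ge> N"
      have mono: "(2*d+1) / Suc k \<le> (2*d+1) / Suc N" if "k \<ge> N" for k
        using that d0 by (intro divide_left_mono) auto
      have "(norm (s m - s n))\<^sup>2 < e\<^sup>2"
        by (rule lin2[OF key[of m n] bnd[of m] bnd[of n] mono[OF mn(1)] mono[OF mn(2)] N])
      hence "norm (s m - s n) < e" using e by (simp add: power_less_imp_less_base)
      thus "dist (s m) (s n) < e" by (simp add: dist_norm)
    qed
  qed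
  then obtain p where sp: "s \<longlonglongrightarrow> p" using Cauchy_convergent_iff convergent_def by blast
  have pS: "p \<in> S" using cl sS sp closed_sequentially by blast
  have "(\<lambda>n. norm (z - s n)) \<longlonglongrightarrow> norm (z - p)" using sp by (intro tendsto_intros)
  moreover have "(\<lambda>n. d + 1 / Suc n) \<longlonglongrightarrow> d + 0"
    by (intro tendsto_intros LIMSEQ_inverse_real_of_nat[unfolded inverse_eq_divide])
  ultimately have "norm (z - p) \<le> d"
    using sd by (intro LIMSEQ_le) (auto intro: less_imp_le)
  thus ?thesis using pS dle by force
qed




lemma quad0:
  fixes c n :: real
  assumes n: "n \<ge> 0" and h: "\<And>t. 0 \<le> - 2 * t * c + t\<^sup>2 * n"
  shows "c = 0"
proof -
  define k where "k = n + 1"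
  have k: "k > 0" using n by (simp add: k_def)
  have "0 \<le> (- 2 * (c/k) * c + (c/k)\<^sup>2 * n) * k\<^sup>2" using h[of "c/k"] by simp
  also have "(- 2 * (c/k) * c + (c/k)\<^sup>2 * n) * k\<^sup>2 = c\<^sup>2 * (n - 2 * k)"
    using k by (simp add: field_simps power2_eq_square)
  finally have "0 \<le> c\<^sup>2 * (n - 2 * k)" .
  moreover have "n - 2 * k < 0" using n by (simp add: k_def)
  ultimately have "c\<^sup>2 \<le> 0" by (simp add: zero_le_mult_iff)
  thus ?thesis by simp
qed

lemma proj_subspace:
  fixes M :: "'a::{real_inner,complete_space} set"
  assumes cl: "closed M" and sub: "subspace M"
  shows "\<exists>p\<in>M. \<forall>m\<in>M. inner (z - p) m = 0"
proof -
  have "convex M" using sub by (rule subspace_imp_convex)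
  moreover have "M \<noteq> {}" using sub subspace_0 by blast
  ultimately obtain p where pM: "p \<in> M" and pmin: "\<And>x. x \<in> M \<Longrightarrow> norm (z - p) \<le> norm (z - x)"
    using proj_exists[OF cl] by blast
  have "inner (z - p) m = 0" if mM: "m \<in> M" for m
  proof -
    let ?c = "inner (z - p) m"
    have q: "(norm (z - p))\<^sup>2 \<le> (norm (z - p - t *\<^sub>R m))\<^sup>2" for t
    proof -
      have "p + t *\<^sub>R m \<in> M" using sub pM mM by (simp add: subspace_add subspace_scale)
      from pmin[OF this] have "norm (z - p) \<le> norm (z - p - t *\<^sub>R m)" by (simp add: algebra_simps)
      thus ?thesis by (simp add: power_mono)
    qed
    have expand: "(norm (z - p - t *\<^sub>R m))\<^sup>2 = (norm (z - p))\<^sup>2 - 2 * t * ?c + t\<^sup>2 * (norm m)\<^sup>2" for t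
    proof -
      have "inner (z-p) (t *\<^sub>R m) = ((norm (z-p))\<^sup>2 + (norm (t *\<^sub>R m))\<^sup>2 - (norm (z - p - t *\<^sub>R m))\<^sup>2)/2"
        by (rule dot_norm_neg)
      moreover have "inner (z-p) (t *\<^sub>R m) = t * ?c" by simp
      moreover have "(norm (t *\<^sub>R m))\<^sup>2 = t\<^sup>2 * (norm m)\<^sup>2" by (simp add: power_mult_distrib)
      ultimately show ?thesis by argo
    qed
    have ineq: "0 \<le> - 2 * t * ?c + t\<^sup>2 * (norm m)\<^sup>2" for t using q[of t] expand[of t] by argo
    show ?thesis by (rule quad0[OF _ ineq]) simp
  qed
  thus ?thesis using pM by blast
qed

lemma riesz:
  fixes f :: "'a::{real_inner,complete_space} \<Rightarrow> real"
  assumes bl: "bounded_linear f"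
  shows "\<exists>g. \<forall>x. f x = inner x g"
proof (cases "\<forall>x. f x = 0")
  case True thus ?thesis by (intro exI[of _ 0]) auto
next
  case False
  then obtain z where fz: "f z \<noteq> 0" by blast
  interpret f: bounded_linear f by fact
  let ?N = "{x. f x = 0}"
  have cl: "closed ?N"
    using continuous_closed_preimage_constant[OF f.continuous_on[OF continuous_on_id], of UNIV 0]
    by simp
  have sub: "subspace ?N" by (auto simp: subspace_def f.add f.scale f.zero)
  obtain p where pN: "f p = 0" and orth: "\<And>m. f m = 0 \<Longrightarrow> inner (z - p) m = 0"
    using proj_subspace[OF cl sub, of z] by auto
  define w where "w = z - p"
  have fw: "f w = f z" using pN by (simp add: w_def f.diff)
  have w0: "w \<noteq> 0" using fw fz by auto
  have "f x = inner x ((f w / (inner w w)) *\<^sub>R w)" for x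
  proof -
    have "f (f x *\<^sub>R w - f w *\<^sub>R x) = 0" by (simp add: f.diff f.scale)
    hence "inner w (f x *\<^sub>R w - f w *\<^sub>R x) = 0" using orth unfolding w_def
      by (metis inner_commute)
    hence "f x * inner w w = f w * inner x w"
      by (simp add: inner_diff_right inner_commute)
    thus ?thesis using w0 by (simp add: field_simps)
  qed
  thus ?thesis by blast
qed

lemma bounded_linear_weak_cont:
  fixes A :: "'a::{real_inner,complete_space} \<Rightarrow> 'b::real_inner"
  assumes "bounded_linear A" "weak_conv xs x"
  shows "weak_conv (\<lambda>n. A (xs n)) (A x)"
  unfolding weak_conv_def
proof
  fix h
  have "bounded_linear (\<lambda>x. inner (A x) h)"
    using bounded_linear_compose[OF bounded_linear_inner_left assms(1)] .
  then obtain g where g: "\<And>x. inner (A x) h = inner x g" using riesz by blast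
  show "(\<lambda>n. inner (A (xs n)) h) \<longlonglongrightarrow> inner (A x) h"
    unfolding g using assms(2) unfolding weak_conv_def by blast
qed




lemma subspace_closure_span:
  fixes S :: "'a::real_normed_vector set"
  shows "subspace (closure (span S))"
  unfolding subspace_def
proof (intro conjI ballI allI)
  show "0 \<in> closure (span S)" using closure_subset span_zero by blast
next
  fix x y assume "x \<in> closure (span S)" "y \<in> closure (span S)"
  then obtain a b where a: "\<And>n. a n \<in> span S" "a \<longlonglongrightarrow> x" and b: "\<And>n. b n \<in> span S" "b \<longlonglongrightarrow> y"
    unfolding closure_sequential by blast
  have s1: "\<forall>n. a n + b n \<in> span S" using a b span_add by blast
  have t1: "(\<lambda>n. a n + b n) \<longlonglongrightarrow> x + y" using a b by (intro tendsto_intros)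
  from s1 t1 show "x + y \<in> closure (span S)" unfolding closure_sequential
    by (intro exI[of _ "\<lambda>n. a n + b n"] conjI)
next
  fix c :: real and x assume "x \<in> closure (span S)"
  then obtain a where a: "\<And>n. a n \<in> span S" "a \<longlonglongrightarrow> x"
    unfolding closure_sequential by blast
  have s1: "\<forall>n. c *\<^sub>R a n \<in> span S" using a span_scale by blast
  have t1: "(\<lambda>n. c *\<^sub>R a n) \<longlonglongrightarrow> c *\<^sub>R x" using a by (intro tendsto_intros)
  from s1 t1 show "c *\<^sub>R x \<in> closure (span S)" unfolding closure_sequential
    by (intro exI[of _ "\<lambda>n. c *\<^sub>R a n"] conjI)
qed

lemma diag_conv:
  fixes xs :: "nat \<Rightarrow> 'a::real_inner"
  assumes bd: "\<And>n. norm (xs n) \<le> C"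
  shows "\<exists>r. strict_mono r \<and> (\<forall>m. convergent (\<lambda>k. inner (xs (r k)) (xs m)))"
proof -
  interpret subseqs "\<lambda>m s. convergent (\<lambda>k. inner (xs (s k)) (xs m))"
  proof
    fix m and s :: "nat \<Rightarrow> nat" assume "strict_mono s"
    define u where "u = (\<lambda>k. inner (xs (s k)) (xs m))"
    obtain f where f: "strict_mono f" "monoseq (\<lambda>n. u (f n))" using seq_monosub by blast
    have "Bseq (\<lambda>n. u (f n))"
    proof (rule BseqI')
      fix n
      have "norm (u (f n)) \<le> norm (xs (s (f n))) * norm (xs m)"
        unfolding u_def using Cauchy_Schwarz_ineq2 by simp
      also have "\<dots> \<le> C * C" using bd by (intro mult_mono) (auto intro: order_trans[OF norm_ge_zero])
      finally show "norm (u (f n)) \<le> C * C" .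
    qed
    hence "convergent (\<lambda>n. u (f n))" using f(2) Bseq_monoseq_convergent by blast
    thus "\<exists>r'. strict_mono r' \<and> convergent (\<lambda>k. inner (xs ((s \<circ> r') k)) (xs m))"
      using f(1) unfolding u_def by (intro exI[of _ f]) auto
  qed
  have "convergent (\<lambda>k. inner (xs (diagseq k)) (xs m))" for m
  proof -
    have "convergent (\<lambda>k. inner (xs ((diagseq \<circ> (+) (Suc m)) k)) (xs m))"
    proof (rule diagseq_holds)
      fix r s n assume "strict_mono (r :: nat \<Rightarrow> nat)" "convergent (\<lambda>k. inner (xs (s k)) (xs n))"
      from convergent_subseq_convergent[OF this(2) this(1)]
      show "convergent (\<lambda>k. inner (xs ((s \<circ> r) k)) (xs n))" by (simp add: o_def)
    qed
    then obtain L where "(\<lambda>k. inner (xs (diagseq (k + Suc m))) (xs m)) \<longlonglongrightarrow> L"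
      unfolding convergent_def by (auto simp: o_def add.commute)
    hence "(\<lambda>k. inner (xs (diagseq k)) (xs m)) \<longlonglongrightarrow> L"
      by (rule LIMSEQ_offset)
    thus ?thesis unfolding convergent_def by blast
  qed
  thus ?thesis using subseq_diagseq by blast
qed

lemma weak_compact:
  fixes xs :: "nat \<Rightarrow> 'a::{real_inner,complete_space}"
  assumes bd: "\<And>n. norm (xs n) \<le> C"
  shows "\<exists>r x. strict_mono r \<and> weak_conv (xs \<circ> r) x"
proof -
  obtain r where r: "strict_mono r" and cm: "\<And>m. convergent (\<lambda>k. inner (xs (r k)) (xs m))"
    using diag_conv[of xs C, OF bd] by blast
  define y where "y = xs \<circ> r"
  have C0: "C \<ge> 0" using bd[of 0] norm_ge_zero order_trans by blast
  have ybd: "norm (y k) \<le> C" for k using bd by (simp add: y_def)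
  define V where "V = {h. convergent (\<lambda>k. inner (y k) h)}"
  have subV: "subspace V"
    unfolding subspace_def
  proof (intro conjI ballI allI)
    show "0 \<in> V" by (simp add: V_def convergent_const)
  next
    fix a b assume "a \<in> V" "b \<in> V"
    thus "a + b \<in> V" by (simp add: V_def inner_add_right convergent_add)
  next
    fix c :: real and a assume "a \<in> V"
    then obtain L where "(\<lambda>k. inner (y k) a) \<longlonglongrightarrow> L" by (auto simp: convergent_def V_def)
    hence "(\<lambda>k. c * inner (y k) a) \<longlonglongrightarrow> c * L" by (intro tendsto_intros)
    thus "c *\<^sub>R a \<in> V" by (auto simp: convergent_def V_def)
  qed
  have "range xs \<subseteq> V" using cm by (auto simp: V_def y_def)
  hence spanV: "span (range xs) \<subseteq> V" using span_minimal subV by blast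
  define M where "M = closure (span (range xs))"
  have MV: "M \<subseteq> V"
  proof
    fix h assume hM: "h \<in> M"
    have "Cauchy (\<lambda>k. inner (y k) h)"
    proof (rule metric_CauchyI)
      fix e :: real assume e: "e > 0"
      define e' where "e' = e / (4 * (C + 1))"
      have e': "e' > 0" using e C0 by (simp add: e'_def)
      obtain h' where h': "h' \<in> span (range xs)" "dist h' h < e'"
        using hM e' unfolding M_def closure_approachable by blast
      have "convergent (\<lambda>k. inner (y k) h')" using h' spanV by (auto simp: V_def)
      hence "Cauchy (\<lambda>k. inner (y k) h')" by (simp add: Cauchy_convergent_iff)
      then obtain N where N: "\<forall>m\<ge>N. \<forall>n\<ge>N. dist (inner (y m) h') (inner (y n) h') < e/2"
        using metric_CauchyD[of "\<lambda>k. inner (y k) h'" "e/2"] e by auto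
      show "\<exists>N. \<forall>m\<ge>N. \<forall>n\<ge>N. dist (inner (y m) h) (inner (y n) h) < e"
      proof (intro exI allI impI)
        fix m n assume mn: "m \<ge> N" "n \<ge> N"
        have b1: "\<bar>inner (y k) h - inner (y k) h'\<bar> \<le> C * e'" for k
        proof -
          have "\<bar>inner (y k) h - inner (y k) h'\<bar> = \<bar>inner (y k) (h - h')\<bar>" by (simp add: inner_diff_right)
          also have "\<dots> \<le> norm (y k) * norm (h - h')" by (rule Cauchy_Schwarz_ineq2)
          also have "\<dots> \<le> C * e'" using ybd[of k] h'(2) C0
            by (intro mult_mono) (auto simp: dist_norm norm_minus_commute)
          finally show ?thesis .
        qed
        have "C * e' \<le> e / 4" using C0 e by (simp add: e'_def field_simps)
        moreover have "\<bar>inner (y m) h' - inner (y n) h'\<bar> < e/2" using N[rule_format, OF mn] by (simp add: dist_real_def)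
        moreover note b1[of m] b1[of n]
        ultimately have "\<bar>inner (y m) h - inner (y n) h\<bar> < e" by argo
        thus "dist (inner (y m) h) (inner (y n) h) < e" by (simp add: dist_real_def)
      qed
    qed
    thus "h \<in> V" by (simp add: V_def Cauchy_convergent_iff)
  qed
  have yM: "y k \<in> M" for k
  proof -
    have "xs (r k) \<in> span (range xs)" by (rule span_base) simp
    thus ?thesis unfolding M_def y_def using closure_subset by (auto simp: o_def)
  qed
  have allconv: "convergent (\<lambda>k. inner (y k) h)" for h
  proof -
    obtain p where pM: "p \<in> M" and orth: "\<And>m. m \<in> M \<Longrightarrow> inner (h - p) m = 0"
      using proj_subspace[of M h] subspace_closure_span unfolding M_def by blast
    have "inner (y k) h = inner (y k) p" for k
    proof -
      have "inner (y k) (h - p) = 0" using orth[OF yM[of k]] by (simp add: inner_commute)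
      thus ?thesis by (simp add: inner_diff_right)
    qed
    moreover have "convergent (\<lambda>k. inner (y k) p)" using MV pM by (auto simp: V_def)
    ultimately show ?thesis by simp
  qed
  define L where "L h = lim (\<lambda>k. inner (y k) h)" for h
  have Lt: "(\<lambda>k. inner (y k) h) \<longlonglongrightarrow> L h" for h
    using allconv[of h] by (simp add: L_def convergent_LIMSEQ_iff)
  have "bounded_linear L"
  proof (rule bounded_linear_intro[where K = C])
    fix a b
    have "(\<lambda>k. inner (y k) (a + b)) \<longlonglongrightarrow> L a + L b"
      unfolding inner_add_right by (intro tendsto_intros Lt)
    thus "L (a + b) = L a + L b" using Lt[of "a+b"] LIMSEQ_unique by blast
  next
    fix c :: real and a
    have "(\<lambda>k. inner (y k) (c *\<^sub>R a)) \<longlonglongrightarrow> c *\<^sub>R L a"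
      unfolding inner_scaleR_right by (simp, intro tendsto_intros Lt)
    thus "L (c *\<^sub>R a) = c *\<^sub>R L a" using Lt[of "c *\<^sub>R a"] LIMSEQ_unique by blast
  next
    fix a
    have "(\<lambda>k. \<bar>inner (y k) a\<bar>) \<longlonglongrightarrow> \<bar>L a\<bar>" by (intro tendsto_intros Lt)
    moreover have "\<bar>inner (y k) a\<bar> \<le> norm a * C" for k
    proof -
      have "norm (y k) * norm a \<le> C * norm a" using ybd[of k] by (rule mult_right_mono) simp
      thus ?thesis using Cauchy_Schwarz_ineq2[of "y k" a] by (simp add: mult.commute)
    qed
    ultimately have "\<bar>L a\<bar> \<le> norm a * C" by (intro LIMSEQ_le_const2) auto
    thus "norm (L a) \<le> norm a * C" by simp
  qed
  then obtain g where g: "\<And>h. L h = inner h g" using riesz by blast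
  have "weak_conv y g" unfolding weak_conv_def
    using Lt by (metis g inner_commute)
  thus ?thesis using r y_def by blast
qed




lemma weak_conv_diff:
  assumes "weak_conv xs a" "weak_conv ys b" shows "weak_conv (\<lambda>n. xs n - ys n) (a - b)"
  unfolding weak_conv_def
proof
  fix h
  have "(\<lambda>n. inner (xs n) h) \<longlonglongrightarrow> inner a h" "(\<lambda>n. inner (ys n) h) \<longlonglongrightarrow> inner b h"
    using assms unfolding weak_conv_def by auto
  from tendsto_diff[OF this]
  show "(\<lambda>n. inner (xs n - ys n) h) \<longlonglongrightarrow> inner (a - b) h" by (simp add: inner_diff_left)
qed

lemma norm_lsc:
  fixes us :: "nat \<Rightarrow> 'a::real_inner"
  assumes w: "weak_conv us u"
  shows "ereal ((1/2) * (norm u)\<^sup>2) \<le> liminf (\<lambda>k. ereal ((1/2) * (norm (us k))\<^sup>2))"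
  unfolding le_Liminf_iff
proof (intro allI impI)
  fix z assume z: "z < ereal ((1/2) * (norm u)\<^sup>2)"
  show "\<forall>\<^sub>F k in sequentially. z < ereal ((1/2) * (norm (us k))\<^sup>2)"
  proof (cases z)
    case (real b)
    let ?c = "(1/2) * (norm u)\<^sup>2"
    have bc: "b < ?c" using z real by simp
    have t: "(\<lambda>k. inner (us k) u) \<longlonglongrightarrow> inner u u" using w unfolding weak_conv_def by blast
    have "inner u u - (?c - b) < inner u u" using bc by simp
    from order_tendstoD(1)[OF t this]
    show ?thesis
    proof (rule eventually_mono)
      fix k assume k: "inner u u - (?c - b) < inner (us k) u"
      have "inner (us k) u = ((norm (us k))\<^sup>2 + (norm u)\<^sup>2 - (norm (us k - u))\<^sup>2) / 2"
        by (rule dot_norm_neg)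
      moreover have "(norm (us k - u))\<^sup>2 \<ge> 0" by simp
      moreover have "inner u u = (norm u)\<^sup>2" by (simp add: power2_norm_eq_inner)
      ultimately have "b < (1/2) * (norm (us k))\<^sup>2" using k by argo
      thus "z < ereal ((1/2) * (norm (us k))\<^sup>2)" using real by simp
    qed
  next
    case PInf thus ?thesis using z by simp
  next
    case MInf thus ?thesis by simp
  qed
qed

lemma reg_lsc:
  fixes xs us :: "nat \<Rightarrow> 'a::real_inner"
  assumes wx: "weak_conv xs x" and wu: "weak_conv us (P x - x)" and lsc: "weakly_lsc Q"
    and Q0: "\<And>x. Q x \<ge> 0" and lam: "lam > 0"
  shows "Reg P lam Q x \<le> liminf (\<lambda>k. ereal ((1/2) * (norm (us k))\<^sup>2) + ereal lam * Q (xs k))"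
proof -
  have "Reg P lam Q x = ereal ((1/2) * (norm (P x - x))\<^sup>2) + ereal lam * Q x"
    by (simp add: Reg_def)
  also have "\<dots> \<le> liminf (\<lambda>k. ereal ((1/2) * (norm (us k))\<^sup>2)) + ereal lam * liminf (\<lambda>k. Q (xs k))"
  proof (rule add_mono)
    show "ereal ((1/2) * (norm (P x - x))\<^sup>2) \<le> liminf (\<lambda>k. ereal ((1/2) * (norm (us k))\<^sup>2))"
      by (rule norm_lsc[OF wu])
    show "ereal lam * Q x \<le> ereal lam * liminf (\<lambda>k. Q (xs k))"
      using lsc wx lam unfolding weakly_lsc_def by (intro ereal_mult_left_mono) auto
  qed
  also have "ereal lam * liminf (\<lambda>k. Q (xs k)) = liminf (\<lambda>k. ereal lam * Q (xs k))"
    using lam by (intro Liminf_ereal_mult_left[symmetric]) auto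
  also have "liminf (\<lambda>k. ereal ((1/2) * (norm (us k))\<^sup>2)) + liminf (\<lambda>k. ereal lam * Q (xs k))
      \<le> liminf (\<lambda>k. ereal ((1/2) * (norm (us k))\<^sup>2) + ereal lam * Q (xs k))"
    using lam Q0 by (intro Liminf_add_le) auto
  finally show ?thesis .
qed

lemma coercive_bound:
  assumes co: "coercive Q" and lam: "lam > 0" and Q0: "\<And>x. Q x \<ge> 0"
  shows "\<exists>r. \<forall>P x. Reg P lam Q x \<le> ereal c \<longrightarrow> norm x < r"
proof -
  obtain r where r: "\<And>x. norm x \<ge> r \<Longrightarrow> Q x \<ge> ereal (c / lam + 1)"
    using co unfolding coercive_def by blast
  have "norm x < r" if h: "Reg P lam Q x \<le> ereal c" for P x
  proof (rule ccontr)
    assume "\<not> norm x < r"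
    hence q: "Q x \<ge> ereal (c / lam + 1)" using r by simp
    have "ereal (lam * (c / lam + 1)) = ereal lam * ereal (c / lam + 1)" by simp
    also have "\<dots> \<le> ereal lam * Q x" using q lam by (intro ereal_mult_left_mono) auto
    also have "\<dots> = 0 + ereal lam * Q x" by simp
    also have "\<dots> \<le> ereal ((1/2) * (norm (P x - x))\<^sup>2) + ereal lam * Q x"
      by (intro add_right_mono) simp
    also have "\<dots> \<le> ereal c" using h by (simp add: Reg_def)
    finally have "lam * (c / lam + 1) \<le> c" by simp
    moreover have "lam * (c / lam + 1) = c + lam" using lam by (simp add: field_simps)
    ultimately show False using lam by simp
  qed
  thus ?thesis by blast
qed

lemma reg_finite:
  assumes "Q x \<noteq> \<infinity>" "Q x \<ge> 0"
  shows "Reg P lam Q x = ereal ((1/2) * (norm (P x - x))\<^sup>2 + lam * real_of_ereal (Q x))"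
  using assms by (cases "Q x") (auto simp: Reg_def)

lemma reg_nonneg:
  assumes "\<And>x. Q x \<ge> 0" "lam > 0" shows "Reg P lam Q x \<ge> 0"
  using assms unfolding Reg_def by (intro add_nonneg_nonneg) auto

lemma reg_infinite:
  assumes "Q x = \<infinity>" "lam > 0" shows "Reg P lam Q x = \<infinity>"
  using assms by (simp add: Reg_def)



theorem theorem1:
  fixes A :: "'a::{real_inner,complete_space} \<Rightarrow> 'b::{real_inner,complete_space}"
    and Phi :: "'a \<Rightarrow> 'a"
    and Phid :: "real \<Rightarrow> 'a \<Rightarrow> 'a"
    and Q :: "'a \<Rightarrow> ereal"
    and lam :: real
    and y :: 'b
    and delta :: "nat \<Rightarrow> real"
    and yn :: "nat \<Rightarrow> 'b"
    and xn :: "nat \<Rightarrow> 'a"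
  assumes A_lin: "bounded_linear A"
    and lam_pos: "lam > 0"
    and A1: "weakly_seq_continuous Phi" "\<And>d. d > 0 \<Longrightarrow> weakly_seq_continuous (Phid d)"
    and A2: "\<And>B h. bounded B \<Longrightarrow>
               uniform_limit B (\<lambda>d x. inner (Phid d x - Phi x) h) (\<lambda>x. 0) (at_right 0)"
    and A3: "\<And>x. R_min_solution A y (Reg Phi lam Q) x \<Longrightarrow>
               ((\<lambda>d. Phid d x) \<longlongrightarrow> Phi x) (at_right 0)"
    and Q_nonneg: "\<And>x. Q x \<ge> 0"
    and A4: "proper Q" "coercive Q" "weakly_lsc Q"
    and solvable: "\<exists>x. A x = y \<and> Q x < \<infinity>"
    and delta_pos: "\<And>n. delta n > 0"
    and delta_lim: "delta \<longlonglongrightarrow> 0"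
    and data: "\<And>n. norm (y - yn n) \<le> delta n"
    and xn_feas: "\<And>n. norm (A (xn n) - yn n) \<le> delta n"
    and xn_min: "\<And>n z. norm (A z - yn n) \<le> delta n \<Longrightarrow>
                   Reg (Phid (delta n)) lam Q (xn n) \<le> Reg (Phid (delta n)) lam Q z"
  shows "(\<exists>r x. strict_mono r \<and> weak_conv (xn \<circ> r) x)
    \<and> (\<forall>r xp. strict_mono r \<and> weak_conv (xn \<circ> r) xp \<longrightarrow>
          R_min_solution A y (Reg Phi lam Q) xp \<and>
          ((\<lambda>k. Reg (Phid (delta (r k))) lam Q (xn (r k))) \<longlongrightarrow> Reg Phi lam Q xp) sequentially)
    \<and> (\<forall>xp. R_min_solution A y (Reg Phi lam Q) xp \<and>
            (\<forall>z. R_min_solution A y (Reg Phi lam Q) z \<longrightarrow> z = xp) \<longrightarrow>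
          weak_conv xn xp \<and>
          ((\<lambda>n. Reg (Phid (delta n)) lam Q (xn n)) \<longlongrightarrow> Reg Phi lam Q xp) sequentially)"
proof -
  define R where "R = Reg Phi lam Q"
  define Rn where "Rn n = Reg (Phid (delta n)) lam Q" for n
  obtain x0 where x0: "A x0 = y" "Q x0 < \<infinity>" using solvable by blast
  have Rnn: "R x \<ge> 0" for x unfolding R_def using Q_nonneg lam_pos by (rule reg_nonneg)
  have phiw: "weak_conv (\<lambda>k. Phi (zs k)) (Phi z)" if "weak_conv zs z" for zs z
    using A1(1) that unfolding weakly_seq_continuous_def by blast
  have Aw: "weak_conv (\<lambda>k. A (zs k)) (A z)" if "weak_conv zs z" for zs z
    using bounded_linear_weak_cont[OF A_lin that] .
  \<comment> \<open>Step 1: existence of an R-minimizing solution\<close>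
  define S where "S = {x. A x = y}"
  define V where "V = Inf (R ` S)"
  have VR: "V \<le> R x" if "A x = y" for x unfolding V_def S_def using that by (auto intro: INF_lower)
  have "R x0 \<noteq> \<infinity>" unfolding R_def using reg_finite[of Q x0 Phi lam] x0 Q_nonneg[of x0] by simp
  hence Vfin: "V \<noteq> \<infinity>" using VR[OF x0(1)] by auto
  have V0: "V \<ge> 0" unfolding V_def using Rnn by (auto intro: Inf_greatest)
  then obtain v where v: "V = ereal v" using Vfin by (cases V) auto
  have "\<exists>z. A z = y \<and> R z < ereal (v + 1 / Suc j)" for j
  proof -
    have "Inf (R ` S) < ereal (v + 1 / Suc j)" using v unfolding V_def by simp
    then show ?thesis unfolding Inf_less_iff S_def by auto
  qed
  then obtain zs where zsS: "\<And>j. A (zs j) = y" and zsR: "\<And>j. R (zs j) < ereal (v + 1 / Suc j)"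
    by metis
  obtain r0 where r0: "\<And>P x. Reg P lam Q x \<le> ereal (v + 1) \<longrightarrow> norm x < r0"
    using coercive_bound[OF A4(2) lam_pos Q_nonneg, of "v + 1"] by blast
  have "R (zs j) \<le> ereal (v + 1)" for j
  proof -
    have "ereal (v + 1 / real (Suc j)) \<le> ereal (v + 1)" by simp
    thus ?thesis using zsR[of j] by (meson order_trans less_imp_le)
  qed
  hence zsb: "norm (zs j) \<le> r0" for j using r0 unfolding R_def by (meson less_imp_le)
  obtain s zl where s: "strict_mono s" and zl: "weak_conv (zs \<circ> s) zl"
    using weak_compact[of zs r0, OF zsb] by blast
  have Azl: "A zl = y"
  proof -
    have "weak_conv (\<lambda>k. A ((zs \<circ> s) k)) (A zl)" using Aw[OF zl] .
    moreover have "weak_conv (\<lambda>k. A ((zs \<circ> s) k)) y" using zsS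
      by (simp add: weak_conv_def)
    ultimately show ?thesis using weak_conv_unique by blast
  qed
  have "R zl \<le> liminf (\<lambda>k. ereal ((1/2) * (norm (Phi ((zs \<circ> s) k) - (zs \<circ> s) k))\<^sup>2) + ereal lam * Q ((zs \<circ> s) k))"
    unfolding R_def
    by (rule reg_lsc[where P=Phi and Q=Q and lam=lam, OF zl weak_conv_diff[OF phiw[OF zl] zl] A4(3) Q_nonneg lam_pos])
  also have "\<dots> = liminf (\<lambda>k. R (zs (s k)))" by (simp add: R_def Reg_def)
  also have "\<dots> \<le> liminf (\<lambda>k. ereal (v + 1 / Suc (s k)))"
    using zsR by (intro Liminf_mono always_eventually allI less_imp_le)
  also have "\<dots> = ereal v"
  proof (rule lim_imp_Liminf)
    have "(\<lambda>n. 1 / real (Suc n)) \<longlonglongrightarrow> 0"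
      using LIMSEQ_inverse_real_of_nat by (simp add: inverse_eq_divide)
    from LIMSEQ_subseq_LIMSEQ[OF this s]
    have "(\<lambda>k. 1 / real (Suc (s k))) \<longlonglongrightarrow> 0" by (simp add: o_def)
    hence "(\<lambda>k. v + 1 / real (Suc (s k))) \<longlonglongrightarrow> v + 0" by (intro tendsto_intros)
    thus "(\<lambda>k. ereal (v + 1 / Suc (s k))) \<longlonglongrightarrow> ereal v" by simp
  qed simp
  finally have "R zl \<le> V" using v by simp
  hence xdmin: "R_min_solution A y R zl" unfolding R_min_solution_def using Azl VR by (auto intro: order_trans)
  define xd where "xd = zl"
  have xdm: "R_min_solution A y R xd" using xdmin by (simp add: xd_def)
  have Axd: "A xd = y" using xdm by (simp add: R_min_solution_def)
  have xdle: "R xd \<le> R z" if "A z = y" for z using xdm that by (simp add: R_min_solution_def)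
  have "R xd \<noteq> \<infinity>" using xdle[OF x0(1)] \<open>R x0 \<noteq> \<infinity>\<close> by auto
  hence Qxd: "Q xd \<noteq> \<infinity>" using reg_infinite[of Q xd lam Phi] lam_pos by (auto simp: R_def)
  define q where "q = real_of_ereal (Q xd)"
  have Rnxd: "Rn n xd = ereal ((1/2) * (norm (Phid (delta n) xd - xd))\<^sup>2 + lam * q)" for n
    unfolding Rn_def q_def using Qxd Q_nonneg by (rule reg_finite)
  have Rxd: "R xd = ereal ((1/2) * (norm (Phi xd - xd))\<^sup>2 + lam * q)"
    unfolding R_def q_def using Qxd Q_nonneg by (rule reg_finite)
  have dfl: "filterlim delta (at_right 0) sequentially"
    using delta_lim delta_pos by (intro tendsto_imp_filterlim_at_right) auto
  have "((\<lambda>d. Phid d xd) \<longlongrightarrow> Phi xd) (at_right 0)" using A3 xdm unfolding R_def by blast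
  from filterlim_compose[OF this dfl]
  have pt: "(\<lambda>n. Phid (delta n) xd) \<longlonglongrightarrow> Phi xd" .
  have treal: "(\<lambda>n. (1/2) * (norm (Phid (delta n) xd - xd))\<^sup>2 + lam * q) \<longlonglongrightarrow> (1/2) * (norm (Phi xd - xd))\<^sup>2 + lam * q"
    using pt by (intro tendsto_intros)
  hence Rnxd_lim: "(\<lambda>n. Rn n xd) \<longlonglongrightarrow> R xd" unfolding Rnxd Rxd by simp
  obtain K where K: "\<And>n. norm ((1/2) * (norm (Phid (delta n) xd - xd))\<^sup>2 + lam * q) \<le> K"
    using BseqE[OF convergent_imp_Bseq[OF convergentI[OF treal]]] by metis
  have feas_xd: "norm (A xd - yn n) \<le> delta n" for n using Axd data by simp
  have xn_le: "Rn n (xn n) \<le> Rn n xd" for n unfolding Rn_def using xn_min[OF feas_xd] .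
  have "Rn n (xn n) \<le> ereal K" for n
  proof -
    have "Rn n xd \<le> ereal K" unfolding Rnxd using K[of n] by simp
    thus ?thesis using xn_le[of n] by (rule order_trans[rotated])
  qed
  obtain r1 where r1: "\<And>P x. Reg P lam Q x \<le> ereal K \<longrightarrow> norm x < r1"
    using coercive_bound[OF A4(2) lam_pos Q_nonneg, of K] by blast
  have xnb: "norm (xn n) \<le> r1" for n using r1 \<open>\<And>n. Rn n (xn n) \<le> ereal K\<close> unfolding Rn_def
    by (meson less_imp_le)
  have part1: "\<exists>r x. strict_mono r \<and> weak_conv (xn \<circ> r) x"
    using weak_compact[of xn r1, OF xnb] .
  have Axn: "(\<lambda>n. A (xn n)) \<longlonglongrightarrow> y"
  proof (rule LIM_zero_cancel, rule Lim_null_comparison)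
    show "\<forall>\<^sub>F n in sequentially. norm (A (xn n) - y) \<le> 2 * delta n"
    proof (rule always_eventually, rule allI)
      fix n
      have "norm (A (xn n) - y) \<le> norm (A (xn n) - yn n) + norm (y - yn n)"
        using norm_triangle_ineq4[of "A (xn n) - yn n" "y - yn n"] by simp
      thus "norm (A (xn n) - y) \<le> 2 * delta n" using xn_feas[of n] data[of n] by argo
    qed
    show "(\<lambda>n. 2 * delta n) \<longlonglongrightarrow> 0" using tendsto_mult_left[OF delta_lim, of 2] by simp
  qed
  have part2: "R_min_solution A y R xp \<and> ((\<lambda>k. Rn (r k) (xn (r k))) \<longlongrightarrow> R xp) sequentially"
    if r: "strict_mono r" and wxp: "weak_conv (xn \<circ> r) xp" for r xp
  proof -
    have Axp: "A xp = y"
    proof -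
      have "weak_conv (\<lambda>k. A ((xn \<circ> r) k)) (A xp)" using Aw[OF wxp] .
      moreover have "(\<lambda>k. A ((xn \<circ> r) k)) \<longlonglongrightarrow> y"
        using LIMSEQ_subseq_LIMSEQ[OF Axn r] by (simp add: o_def)
      hence "weak_conv (\<lambda>k. A ((xn \<circ> r) k)) y" by (rule norm_imp_weak_conv)
      ultimately show ?thesis using weak_conv_unique by blast
    qed
    have drl: "filterlim (\<lambda>k. delta (r k)) (at_right 0) sequentially"
      using filterlim_compose[OF dfl filterlim_subseq[OF r]] .
    have bB: "bounded (range xn)" unfolding bounded_iff using xnb by blast
    have unif: "(\<lambda>k. inner (Phid (delta (r k)) (xn (r k)) - Phi (xn (r k))) h) \<longlonglongrightarrow> 0" for h
    proof (rule tendstoI)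
      fix e :: real assume e: "e > 0"
      have "\<forall>\<^sub>F d in at_right 0. \<forall>x\<in>range xn. dist (inner (Phid d x - Phi x) h) 0 < e"
        using uniform_limitD[OF A2[OF bB, of h] e] .
      hence "\<forall>\<^sub>F k in sequentially. \<forall>x\<in>range xn. dist (inner (Phid (delta (r k)) x - Phi x) h) 0 < e"
        using drl unfolding filterlim_iff by blast
      thus "\<forall>\<^sub>F k in sequentially. dist (inner (Phid (delta (r k)) (xn (r k)) - Phi (xn (r k))) h) 0 < e"
        by (rule eventually_mono) auto
    qed
    have wu: "weak_conv (\<lambda>k. Phid (delta (r k)) ((xn \<circ> r) k) - (xn \<circ> r) k) (Phi xp - xp)"
    proof -
      have w2: "weak_conv (\<lambda>k. Phi ((xn \<circ> r) k) - (xn \<circ> r) k) (Phi xp - xp)"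
        using weak_conv_diff[OF phiw[OF wxp] wxp] .
      show ?thesis unfolding weak_conv_def
      proof
        fix h
        have "(\<lambda>k. inner (Phid (delta (r k)) (xn (r k)) - Phi (xn (r k))) h
                 + inner (Phi ((xn \<circ> r) k) - (xn \<circ> r) k) h) \<longlonglongrightarrow> 0 + inner (Phi xp - xp) h"
        proof -
          have t2: "(\<lambda>k. inner (Phi ((xn \<circ> r) k) - (xn \<circ> r) k) h) \<longlonglongrightarrow> inner (Phi xp - xp) h"
            using w2 unfolding weak_conv_def by blast
          show ?thesis by (rule tendsto_add[OF unif[of h] t2])
        qed
        thus "(\<lambda>k. inner (Phid (delta (r k)) ((xn \<circ> r) k) - (xn \<circ> r) k) h) \<longlonglongrightarrow> inner (Phi xp - xp) h"
          by (simp add: inner_diff_left)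
      qed
    qed
    have lo: "R xp \<le> liminf (\<lambda>k. Rn (r k) (xn (r k)))"
    proof -
      have "R xp \<le> liminf (\<lambda>k. ereal ((1/2) * (norm (Phid (delta (r k)) ((xn \<circ> r) k) - (xn \<circ> r) k))\<^sup>2) + ereal lam * Q ((xn \<circ> r) k))"
        unfolding R_def by (rule reg_lsc[where P="Phi" and Q=Q and lam=lam, OF wxp wu A4(3) Q_nonneg lam_pos])
      thus ?thesis by (simp add: Rn_def Reg_def)
    qed
    have hi: "limsup (\<lambda>k. Rn (r k) (xn (r k))) \<le> R xd"
    proof -
      have "limsup (\<lambda>k. Rn (r k) (xn (r k))) \<le> limsup (\<lambda>k. Rn (r k) xd)"
        using xn_le by (intro Limsup_mono) auto
      also have "limsup (\<lambda>k. Rn (r k) xd) = R xd"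
      proof (rule lim_imp_Limsup)
        show "(\<lambda>k. Rn (r k) xd) \<longlonglongrightarrow> R xd"
          using LIMSEQ_subseq_LIMSEQ[OF Rnxd_lim r] by (simp add: o_def)
      qed simp
      finally show ?thesis .
    qed
    have mid: "liminf (\<lambda>k. Rn (r k) (xn (r k))) \<le> limsup (\<lambda>k. Rn (r k) (xn (r k)))"
      by (rule Liminf_le_Limsup) simp
    have e1: "R xd \<le> R xp" using xdle[OF Axp] .
    have li: "liminf (\<lambda>k. Rn (r k) (xn (r k))) = R xp" using lo mid hi e1 by (meson antisym order_trans)
    have ls: "limsup (\<lambda>k. Rn (r k) (xn (r k))) = R xp" using lo mid hi e1 by (meson antisym order_trans)
    have "((\<lambda>k. Rn (r k) (xn (r k))) \<longlongrightarrow> R xp) sequentially"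
      by (rule Liminf_eq_Limsup[OF _ li ls]) simp
    moreover have "R_min_solution A y R xp" unfolding R_min_solution_def
      using Axp lo mid hi e1 xdle by (meson order_trans)
    ultimately show ?thesis by blast
  qed
  have part3: "weak_conv xn xp"
    if xpm: "R_min_solution A y R xp" and uniq: "\<forall>z. R_min_solution A y R z \<longrightarrow> z = xp" for xp
  proof (rule ccontr)
    assume "\<not> weak_conv xn xp"
    then obtain h where nh: "\<not> (\<lambda>n. inner (xn n) h) \<longlonglongrightarrow> inner xp h" unfolding weak_conv_def by blast
    then obtain e :: real where e: "e > 0"
      and ne: "\<not> eventually (\<lambda>n. dist (inner (xn n) h) (inner xp h) < e) sequentially"
      unfolding tendsto_iff by blast
    obtain r :: "nat \<Rightarrow> nat" where r: "strict_mono r" and rf: "\<And>n. \<not> dist (inner (xn (r n)) h) (inner xp h) < e"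
      using not_eventually_sequentiallyD[OF ne] by auto
    have "norm ((xn \<circ> r) n) \<le> r1" for n using xnb by simp
    then obtain s z where s: "strict_mono s" and wz: "weak_conv ((xn \<circ> r) \<circ> s) z"
      using weak_compact[of "xn \<circ> r" r1] by blast
    have rs: "strict_mono (r \<circ> s)" using r s by (rule strict_mono_o)
    have "R_min_solution A y R z" using part2[OF rs] wz by (simp add: o_assoc)
    hence zxp: "z = xp" using uniq by blast
    have "(\<lambda>k. inner (((xn \<circ> r) \<circ> s) k) h) \<longlonglongrightarrow> inner xp h" using wz zxp unfolding weak_conv_def by blast
    then have "eventually (\<lambda>k. dist (inner (((xn \<circ> r) \<circ> s) k) h) (inner xp h) < e) sequentially"
      using e unfolding tendsto_iff by blast
    then obtain k where "dist (inner (((xn \<circ> r) \<circ> s) k) h) (inner xp h) < e"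
      using eventually_sequentially by auto
    thus False using rf[of "s k"] by simp
  qed
  show ?thesis
  proof (intro conjI allI impI)
    show "\<exists>r x. strict_mono r \<and> weak_conv (xn \<circ> r) x" by (rule part1)
  next
    fix r xp assume "strict_mono r \<and> weak_conv (xn \<circ> r) xp"
    thus "R_min_solution A y (Reg Phi lam Q) xp"
      "((\<lambda>k. Reg (Phid (delta (r k))) lam Q (xn (r k))) \<longlongrightarrow> Reg Phi lam Q xp) sequentially"
      using part2 unfolding R_def Rn_def by blast+
  next
    fix xp assume h: "R_min_solution A y (Reg Phi lam Q) xp \<and>
            (\<forall>z. R_min_solution A y (Reg Phi lam Q) z \<longrightarrow> z = xp)"
    hence wc: "weak_conv xn xp" using part3 unfolding R_def by blast
    show "weak_conv xn xp" by (rule wc)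
    have "strict_mono (id :: nat \<Rightarrow> nat)" by (simp add: strict_mono_def)
    from part2[OF this] wc
    show "((\<lambda>n. Reg (Phid (delta n)) lam Q (xn n)) \<longlongrightarrow> Reg Phi lam Q xp) sequentially"
      unfolding R_def Rn_def by simp
  qed
qed


end
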